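(* Let $\mathcal{C}=\mathrm{CSS}(C_X,C_Z)$ be an $[[n,k,d]]_2$ CSS code exhibiting $(c_1,c_2,\epsilon_0)$-clustering, let $\epsilon<\frac{1}{1000}\min\{\frac{\epsilon_0}{2},\frac{c_2}{4c_1},\frac{d}{2c_1n}\}$ and $\epsilon'=1000\epsilon$. For $y\in G_Z^{\epsilon'}$ define $\mathrm{Cl}(y)=\{y'\in G_Z^{\epsilon'}:|y+y'|_{C_X^\perp}\le 2c_1\epsilon' n\}$. Then the sets $\mathrm{Cl}(y)$, $y\in G_Z^{\epsilon'}$, form a partition of $G_Z^{\epsilon'}$ (any two are equal or disjoint, and $y\in\mathrm{Cl}(y)$), and moreover: (1) any two distinct clusters $\mathrm{Cl}(y)\ne\mathrm{Cl}(y')$ satisfy $\mathrm{dis}(\mathrm{Cl}(y),\mathrm{Cl}(y'))\ge c_2n$; (2) for every $y\in G_Z^{\epsilon'}$ and $c\in C_Z$, $\mathrm{Cl}(y+c)=\mathrm{Cl}(y)+c$, and $\mathrm{Cl}(y+c)=\mathrm{Cl}(y)$ if and only if $c\in C_X^\perp$.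
   Context: Over $\mathbb{F}_2$: $C_X=\ker H_X$, $C_Z=\ker H_Z$, $H_X\in\mathbb{F}_2^{m_X\times n}$, $H_Z\in\mathbb{F}_2^{m_Z\times n}$, $C_X^\perp\subseteq C_Z$, distance $d=\min\{|y|:y\in(C_Z\setminus C_X^\perp)\cup(C_X\setminus C_Z^\perp)\}$. $|y|_C=\min_{y'\in C}|y+y'|$, $\mathrm{dis}(S,T)=\min_{s\in S,t\in T}|s-t|$, $G_X^\epsilon=\{y:|H_Xy|\le\epsilon m_X\}$, $G_Z^\epsilon=\{y:|H_Zy|\le\epsilon m_Z\}$. $(c_1,c_2,\epsilon_0)$-clustering: for all $0<\epsilon<\epsilon_0$, every $y\in G_X^\epsilon$ has $|y|_{C_Z^\perp}\le c_1\epsilon n$ or $\ge c_2 n$, and every $y\in G_Z^\epsilon$ has $|y|_{C_X^\perp}\le c_1\epsilon n$ or $\ge c_2n$. *)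

theory Defs
  imports Main "HOL-Library.Extended_Nat"
begin

text \<open>A vector y in F_2^n is represented by its support, a set
  y \<subseteq> {..<n}. Addition over F_2 is symmetric difference, Hamming weight is card.
  A matrix H in F_2^(m x n) is represented by the supports of its rows:
  H i \<subseteq> {..<n} is the support of row i, for i < m.\<close>

definition vecs :: "nat \<Rightarrow> nat set set" where
  "vecs n = Pow {..<n}"

definition vadd :: "nat set \<Rightarrow> nat set \<Rightarrow> nat set" where
  "vadd a b = (a - b) \<union> (b - a)"

definition syn :: "nat \<Rightarrow> (nat \<Rightarrow> nat set) \<Rightarrow> nat set \<Rightarrow> nat set" where
  "syn m H y = {i. i < m \<and> odd (card (H i \<inter> y))}"

definition kerH :: "nat \<Rightarrow> nat \<Rightarrow> (nat \<Rightarrow> nat set) \<Rightarrow> nat set set" where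
  "kerH n m H = {y \<in> vecs n. syn m H y = {}}"

definition dual :: "nat \<Rightarrow> nat set set \<Rightarrow> nat set set" where
  "dual n C = {y \<in> vecs n. \<forall>c\<in>C. even (card (y \<inter> c))}"

definition cwt :: "nat set set \<Rightarrow> nat set \<Rightarrow> nat" where
  "cwt C y = Min {card (vadd y y') | y'. y' \<in> C}"

definition dis :: "nat set set \<Rightarrow> nat set set \<Rightarrow> nat" where
  "dis S T = Min {card (vadd s t) | s t. s \<in> S \<and> t \<in> T}"

definition Gset :: "nat \<Rightarrow> nat \<Rightarrow> (nat \<Rightarrow> nat set) \<Rightarrow> real \<Rightarrow> nat set set" where
  "Gset n m H eps = {y \<in> vecs n. real (card (syn m H y)) \<le> eps * real m}"

text \<open>CSS code distance (infinity if there is no logical operator).\<close>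
definition css_dist :: "nat \<Rightarrow> nat \<Rightarrow> (nat \<Rightarrow> nat set) \<Rightarrow> nat \<Rightarrow> (nat \<Rightarrow> nat set) \<Rightarrow> enat" where
  "css_dist n mX HX mZ HZ =
     (INF y \<in> (kerH n mZ HZ - dual n (kerH n mX HX)) \<union> (kerH n mX HX - dual n (kerH n mZ HZ)).
        enat (card y))"

definition clustering :: "nat \<Rightarrow> nat \<Rightarrow> (nat \<Rightarrow> nat set) \<Rightarrow> nat \<Rightarrow> (nat \<Rightarrow> nat set)
    \<Rightarrow> real \<Rightarrow> real \<Rightarrow> real \<Rightarrow> bool" where
  "clustering n mX HX mZ HZ c1 c2 eps0 \<longleftrightarrow>
    (\<forall>eps. 0 < eps \<and> eps < eps0 \<longrightarrow>
      (\<forall>y \<in> Gset n mX HX eps.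
         real (cwt (dual n (kerH n mZ HZ)) y) \<le> c1 * eps * real n
       \<or> real (cwt (dual n (kerH n mZ HZ)) y) \<ge> c2 * real n) \<and>
      (\<forall>y \<in> Gset n mZ HZ eps.
         real (cwt (dual n (kerH n mX HX)) y) \<le> c1 * eps * real n
       \<or> real (cwt (dual n (kerH n mX HX)) y) \<ge> c2 * real n))"

definition cluster :: "nat \<Rightarrow> nat \<Rightarrow> (nat \<Rightarrow> nat set) \<Rightarrow> nat \<Rightarrow> (nat \<Rightarrow> nat set)
    \<Rightarrow> real \<Rightarrow> real \<Rightarrow> nat set \<Rightarrow> nat set set" where
  "cluster n mX HX mZ HZ c1 eps' y =
     {y' \<in> Gset n mZ HZ eps'.
        real (cwt (dual n (kerH n mX HX)) (vadd y y')) \<le> 2 * c1 * eps' * real n}"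

end

theory Submission imports Defs begin
lemma vadd_comm: "vadd a b = vadd b a" unfolding vadd_def by blast
lemma vadd_assoc: "vadd (vadd a b) c = vadd a (vadd b c)" unfolding vadd_def by blast
lemma vadd_self: "vadd a a = {}" unfolding vadd_def by blast
lemma vadd_empty: "vadd a {} = a" unfolding vadd_def by blast
lemma vadd_cancel: "vadd (vadd a b) b = a" unfolding vadd_def by blast
lemma vadd_cancel2: "vadd a (vadd a b) = b" unfolding vadd_def by blast
lemma int_vadd: "X \<inter> vadd A B = vadd (X \<inter> A) (X \<inter> B)" unfolding vadd_def by blast

lemma card_vadd: assumes "finite A" "finite B"
  shows "card (vadd A B) + 2 * card (A \<inter> B) = card A + card B"
proof -
  have d: "vadd A B = (A - B) \<union> (B - A)" "(A - B) \<inter> (B - A) = {}" unfolding vadd_def by auto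
  have "card (vadd A B) = card (A - B) + card (B - A)"
    using d assms by (simp add: card_Un_disjoint)
  moreover have "card (A - B) + card (A \<inter> B) = card A"
    using assms by (metis Diff_Diff_Int card_Diff_subset_Int card_mono inf_le1 le_add_diff_inverse2 Diff_disjoint finite_Int  card_Un_disjoint Int_Diff_Un Int_commute inf_commute)
  moreover have "card (B - A) + card (A \<inter> B) = card B"
    using assms by (metis Int_commute card_Diff_subset_Int card_mono inf_le1 le_add_diff_inverse2 finite_Int Diff_Diff_Int)
  ultimately show ?thesis by linarith
qed

lemma card_vadd_le: "finite A \<Longrightarrow> finite B \<Longrightarrow> card (vadd A B) \<le> card A + card B"
  using card_vadd by (metis le_add1)

lemma even_vadd: "finite A \<Longrightarrow> finite B \<Longrightarrow> even (card (vadd A B)) \<longleftrightarrow> (even (card A) \<longleftrightarrow> even (card B))"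
  using card_vadd[of A B] by (metis even_add even_mult_iff odd_one dvd_triv_left)

lemma vecs_fin: "a \<in> vecs n \<Longrightarrow> finite a"
  unfolding vecs_def by (auto intro: finite_subset)
lemma vecs_vadd: "a \<in> vecs n \<Longrightarrow> b \<in> vecs n \<Longrightarrow> vadd a b \<in> vecs n"
  unfolding vecs_def vadd_def by auto

lemma syn_vadd: assumes "finite a" "finite b"
  shows "syn m H (vadd a b) = vadd (syn m H a) (syn m H b)"
proof -
  have "\<And>i. odd (card (H i \<inter> vadd a b)) \<longleftrightarrow> \<not> (odd (card (H i \<inter> a)) \<longleftrightarrow> odd (card (H i \<inter> b)))"
    using assms by (simp add: int_vadd even_vadd)
  then show ?thesis unfolding syn_def vadd_def by auto
qed

lemma card_syn_vadd: assumes "finite a" "finite b" shows "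
   card (syn m H (vadd a b)) \<le> card (syn m H a) + card (syn m H b)"
proof -
  have "finite (syn m H x)" for x unfolding syn_def by auto
  thus ?thesis using assms by (simp add: syn_vadd card_vadd_le)
qed

lemma kerH_vadd: "a \<in> kerH n m H \<Longrightarrow> b \<in> kerH n m H \<Longrightarrow> vadd a b \<in> kerH n m H"
  unfolding kerH_def by (auto simp: syn_vadd vecs_fin vecs_vadd vadd_empty)

lemma dual_vadd: assumes "a \<in> dual n C" "b \<in> dual n C" shows "vadd a b \<in> dual n C"
proof -
  have fa: "finite a" "finite b" using assms vecs_fin unfolding dual_def by auto
  { fix c assume "c \<in> C"
    hence "even (card (a \<inter> c))" "even (card (b \<inter> c))" using assms unfolding dual_def by auto
    moreover have "vadd a b \<inter> c = vadd (a \<inter> c) (b \<inter> c)" unfolding vadd_def by blast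
    ultimately have "even (card (vadd a b \<inter> c))" using fa by (simp add: even_vadd) }
  thus ?thesis using assms unfolding dual_def by (auto simp: vecs_vadd)
qed

lemma dual_empty: "{} \<in> dual n C" unfolding dual_def vecs_def by auto
lemma dual_fin: "finite (dual n C)"
  by (rule finite_subset[of _ "vecs n"]) (auto simp: dual_def vecs_def)
lemma dual_vecs: "a \<in> dual n C \<Longrightarrow> a \<in> vecs n" unfolding dual_def by auto

lemma cwt_le: "finite D \<Longrightarrow> z \<in> D \<Longrightarrow> cwt D y \<le> card (vadd y z)"
  unfolding cwt_def by (rule Min_le) auto

lemma cwt_ex: "finite D \<Longrightarrow> D \<noteq> {} \<Longrightarrow> \<exists>z\<in>D. cwt D y = card (vadd y z)"
proof -
  assume "finite D" "D \<noteq> {}"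
  hence "cwt D y \<in> {card (vadd y y') | y'. y' \<in> D}" unfolding cwt_def
    by (intro Min_in) auto
  thus ?thesis by auto
qed

lemma cwt_tri: assumes "a \<in> vecs n" "b \<in> vecs n"
  shows "cwt (dual n C) (vadd a b) \<le> cwt (dual n C) a + cwt (dual n C) b"
proof -
  obtain za where za: "za \<in> dual n C" "cwt (dual n C) a = card (vadd a za)"
    using cwt_ex[OF dual_fin] dual_empty by blast
  obtain zb where zb: "zb \<in> dual n C" "cwt (dual n C) b = card (vadd b zb)"
    using cwt_ex[OF dual_fin] dual_empty by blast
  have "cwt (dual n C) (vadd a b) \<le> card (vadd (vadd a b) (vadd za zb))"
    by (rule cwt_le[OF dual_fin dual_vadd[OF za(1) zb(1)]])
  also have "vadd (vadd a b) (vadd za zb) = vadd (vadd a za) (vadd b zb)"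
    unfolding vadd_def by blast
  also have "card \<dots> \<le> card (vadd a za) + card (vadd b zb)"
    by (rule card_vadd_le) (use assms za zb dual_vecs vecs_vadd vecs_fin in blast)+
  finally show ?thesis using za zb by simp
qed

lemma cwt_shift1: assumes "z \<in> dual n C"
  shows "cwt (dual n C) (vadd y z) \<le> cwt (dual n C) y"
proof -
  obtain w where w: "w \<in> dual n C" "cwt (dual n C) y = card (vadd y w)"
    using cwt_ex[OF dual_fin] dual_empty by blast
  have "cwt (dual n C) (vadd y z) \<le> card (vadd (vadd y z) (vadd z w))"
    by (rule cwt_le[OF dual_fin dual_vadd[OF assms w(1)]])
  also have "vadd (vadd y z) (vadd z w) = vadd y w" unfolding vadd_def by blast
  finally show ?thesis using w by simp
qed

lemma cwt_shift: assumes "z \<in> dual n C"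
  shows "cwt (dual n C) (vadd y z) = cwt (dual n C) y"
  using cwt_shift1[OF assms, of y] cwt_shift1[OF assms, of "vadd y z"]
  by (simp add: vadd_cancel)

lemma cwt_zero: "cwt (dual n C) {} = 0"
  using cwt_le[OF dual_fin dual_empty, of n C "{}"] by (simp add: vadd_empty)

lemma cwt_card: "cwt (dual n C) y \<le> card y"
  using cwt_le[OF dual_fin dual_empty, of n C y] by (simp add: vadd_empty)

theorem lemma4p10:
  fixes n mX mZ d :: nat and HX HZ :: "nat \<Rightarrow> nat set"
    and c1 c2 eps0 eps :: real
  assumes rowsX: "\<forall>i<mX. HX i \<subseteq> {..<n}"
    and rowsZ: "\<forall>i<mZ. HZ i \<subseteq> {..<n}"
    and css: "dual n (kerH n mX HX) \<subseteq> kerH n mZ HZ"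
    and dist: "css_dist n mX HX mZ HZ = enat d"
    and c1_pos: "0 < c1" and c2_pos: "0 < c2" and eps0_pos: "0 < eps0"
    and clus: "clustering n mX HX mZ HZ c1 c2 eps0"
    and eps_pos: "0 < eps"
    and eps_small: "eps < (1/1000) * min (min (eps0 / 2) (c2 / (4 * c1)))
                                          (real d / (2 * c1 * real n))"
  shows "(\<forall>y \<in> Gset n mZ HZ (1000 * eps).
            y \<in> cluster n mX HX mZ HZ c1 (1000 * eps) y)
       \<and> (\<forall>y \<in> Gset n mZ HZ (1000 * eps). \<forall>y' \<in> Gset n mZ HZ (1000 * eps).
            cluster n mX HX mZ HZ c1 (1000 * eps) y = cluster n mX HX mZ HZ c1 (1000 * eps) y'
          \<or> cluster n mX HX mZ HZ c1 (1000 * eps) y \<inter> cluster n mX HX mZ HZ c1 (1000 * eps) y' = {})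
       \<and> (\<forall>y \<in> Gset n mZ HZ (1000 * eps). \<forall>y' \<in> Gset n mZ HZ (1000 * eps).
            cluster n mX HX mZ HZ c1 (1000 * eps) y \<noteq> cluster n mX HX mZ HZ c1 (1000 * eps) y'
            \<longrightarrow> real (dis (cluster n mX HX mZ HZ c1 (1000 * eps) y)
                           (cluster n mX HX mZ HZ c1 (1000 * eps) y')) \<ge> c2 * real n)
       \<and> (\<forall>y \<in> Gset n mZ HZ (1000 * eps). \<forall>c \<in> kerH n mZ HZ.
            cluster n mX HX mZ HZ c1 (1000 * eps) (vadd y c)
              = (\<lambda>z. vadd z c) ` cluster n mX HX mZ HZ c1 (1000 * eps) y
          \<and> (cluster n mX HX mZ HZ c1 (1000 * eps) (vadd y c)
              = cluster n mX HX mZ HZ c1 (1000 * eps) y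
             \<longleftrightarrow> c \<in> dual n (kerH n mX HX)))"
proof -
  define e where "e = 1000 * eps"
  define D where "D = dual n (kerH n mX HX)"
  define KZ where "KZ = kerH n mZ HZ"
  define G where "G = Gset n mZ HZ e"
  define T where "T = 2 * c1 * e * real n"
  define R where "R = (\<lambda>a b. real (cwt D (vadd a b)) \<le> T)"
  define Cl where "Cl = cluster n mX HX mZ HZ c1 e"
  have Cl_eq: "Cl y = {y' \<in> G. R y y'}" for y
    unfolding Cl_def cluster_def G_def R_def D_def T_def by simp
  have npos: "n > 0"
  proof (rule ccontr)
    assume "\<not> n > 0" hence "n = 0" by simp
    thus False using eps_small eps_pos by simp
  qed
  have epos: "e > 0" using eps_pos e_def by simp
  have e2: "2 * e < eps0" using eps_small e_def by simp
  have ec2: "4 * c1 * e < c2"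
    using eps_small e_def c1_pos by (simp add: field_simps)
  have ed: "e * (2 * c1 * real n) < real d"
    using eps_small e_def c1_pos npos by (simp add: field_simps)
  have Td: "T < real d" using ed T_def by (simp add: algebra_simps)
  have T2: "2 * T < c2 * real n" using ec2 npos T_def
    by (simp add: algebra_simps)
  have T0: "0 \<le> T" using T_def c1_pos epos by simp
  have Gv: "y \<in> G \<Longrightarrow> y \<in> vecs n" for y unfolding G_def Gset_def by auto
  have Gs: "y \<in> G \<Longrightarrow> real (card (syn mZ HZ y)) \<le> e * real mZ" for y
    unfolding G_def Gset_def by auto
  have clusZ: "real (cwt D a) \<le> T \<or> real (cwt D a) \<ge> c2 * real n"
    if "a \<in> vecs n" "real (card (syn mZ HZ a)) \<le> 2 * e * real mZ" for a
  proof -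
    have "a \<in> Gset n mZ HZ (2 * e)" using that unfolding Gset_def by simp
    hence "real (cwt D a) \<le> c1 * (2 * e) * real n \<or> real (cwt D a) \<ge> c2 * real n"
    proof -
      have "\<forall>y\<in>Gset n mZ HZ (2*e). real (cwt D y) \<le> c1 * (2*e) * real n \<or> real (cwt D y) \<ge> c2 * real n"
        using clus e2 epos unfolding clustering_def D_def by auto
      thus ?thesis using \<open>a \<in> Gset n mZ HZ (2 * e)\<close> by blast
    qed
    thus ?thesis unfolding T_def by (simp add: algebra_simps)
  qed
  have sum_dich: "R a b \<or> real (cwt D (vadd a b)) \<ge> c2 * real n" if "a \<in> G" "b \<in> G" for a b
  proof -
    have "real (card (syn mZ HZ (vadd a b))) \<le> real (card (syn mZ HZ a)) + real (card (syn mZ HZ b))"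
    proof -
      have "finite a" "finite b" using that Gv vecs_fin by blast+
      hence "card (syn mZ HZ (vadd a b)) \<le> card (syn mZ HZ a) + card (syn mZ HZ b)"
        by (rule card_syn_vadd)
      thus ?thesis by linarith
    qed
    also have "\<dots> \<le> 2 * e * real mZ" using Gs[OF that(1)] Gs[OF that(2)] by linarith
    finally show ?thesis using clusZ[of "vadd a b"] that Gv vecs_vadd unfolding R_def by blast
  qed
  have Rsym: "R a b \<Longrightarrow> R b a" for a b unfolding R_def by (simp add: vadd_comm)
  have Rtrans: "R a c" if "a \<in> G" "b \<in> G" "c \<in> G" "R a b" "R b c" for a b c
  proof -
    have "vadd a c = vadd (vadd a b) (vadd b c)" unfolding vadd_def by blast
    hence "cwt D (vadd a c) \<le> cwt D (vadd a b) + cwt D (vadd b c)"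
      unfolding D_def using cwt_tri that Gv vecs_vadd by metis
    hence "real (cwt D (vadd a c)) \<le> 2 * T" using that(4,5) unfolding R_def by linarith
    thus ?thesis using sum_dich[OF that(1,3)] T2 by linarith
  qed
  have Rrefl: "R a a" for a unfolding R_def D_def using T0 by (simp add: vadd_self cwt_zero)
  have P1: "\<forall>y\<in>G. y \<in> Cl y" using Rrefl Cl_eq by simp
  have Ceq: "Cl y = Cl y'" if "y \<in> G" "y' \<in> G" "R y y'" for y y'
    unfolding Cl_eq using that Rtrans Rsym by blast
  have P2: "\<forall>y\<in>G. \<forall>y'\<in>G. Cl y = Cl y' \<or> Cl y \<inter> Cl y' = {}"
  proof (intro ballI)
    fix y y' assume yy: "y \<in> G" "y' \<in> G"
    show "Cl y = Cl y' \<or> Cl y \<inter> Cl y' = {}"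
    proof (cases "Cl y \<inter> Cl y' = {}")
      case False
      then obtain z where z: "z \<in> G" "R y z" "R y' z" unfolding Cl_eq by auto
      have "R y y'" using Rtrans[OF yy(1) z(1) yy(2) z(2) Rsym[OF z(3)]] .
      thus ?thesis using Ceq yy by blast
    qed simp
  qed
  have Clsub: "Cl y \<subseteq> vecs n" for y unfolding Cl_eq using Gv by auto
  have Clfin: "finite (Cl y)" for y
    by (rule finite_subset[OF Clsub]) (simp add: vecs_def)
  have P3: "\<forall>y\<in>G. \<forall>y'\<in>G. Cl y \<noteq> Cl y' \<longrightarrow> real (dis (Cl y) (Cl y')) \<ge> c2 * real n"
  proof (intro ballI impI)
    fix y y' assume yy: "y \<in> G" "y' \<in> G" and ne: "Cl y \<noteq> Cl y'"
    have nR: "\<not> R y y'" using Ceq yy ne by blast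
    let ?S = "{card (vadd s t) | s t. s \<in> Cl y \<and> t \<in> Cl y'}"
    have fS: "finite ?S"
    proof -
      have "?S = (\<lambda>(s,t). card (vadd s t)) ` (Cl y \<times> Cl y')" by auto
      thus ?thesis using Clfin by simp
    qed
    have neS: "?S \<noteq> {}" using P1 yy by blast
    have "\<forall>x\<in>?S. c2 * real n \<le> real x"
    proof
      fix x assume "x \<in> ?S"
      then obtain s t where st: "s \<in> Cl y" "t \<in> Cl y'" "x = card (vadd s t)" by blast
      have sG: "s \<in> G" "R y s" "t \<in> G" "R y' t" using st Cl_eq by auto
      have "\<not> R s t"
      proof
        assume "R s t"
        hence "R y t" using Rtrans sG yy by blast
        hence "R y y'" using Rtrans[OF yy(1) sG(3) yy(2)] Rsym sG by blast
        thus False using nR by simp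
      qed
      hence "c2 * real n \<le> real (cwt D (vadd s t))" using sum_dich sG by blast
      also have "\<dots> \<le> real x" using st cwt_card unfolding D_def by simp
      finally show "c2 * real n \<le> real x" .
    qed
    moreover have "Min ?S \<in> ?S" using fS neS by (rule Min_in)
    ultimately show "real (dis (Cl y) (Cl y')) \<ge> c2 * real n" unfolding dis_def by blast
  qed
  have KZv: "c \<in> KZ \<Longrightarrow> c \<in> vecs n" for c unfolding KZ_def kerH_def by auto
  have KZs: "c \<in> KZ \<Longrightarrow> syn mZ HZ c = {}" for c unfolding KZ_def kerH_def by auto
  have Gshift: "vadd z c \<in> G \<longleftrightarrow> z \<in> G" if "c \<in> KZ" "z \<in> vecs n" for z c
  proof -
    have "syn mZ HZ (vadd z c) = syn mZ HZ z"
    proof -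
      have "finite z" "finite c" using that KZv vecs_fin by blast+
      thus ?thesis using syn_vadd KZs[OF that(1)] by (simp add: vadd_empty)
    qed
    moreover have "vadd z c \<in> vecs n" using that KZv vecs_vadd by blast
    ultimately show ?thesis unfolding G_def Gset_def using that by simp
  qed
  have P4: "\<forall>y\<in>G. \<forall>c\<in>KZ. Cl (vadd y c) = (\<lambda>z. vadd z c) ` Cl y \<and> (Cl (vadd y c) = Cl y \<longleftrightarrow> c \<in> D)"
  proof (intro ballI conjI)
    fix y c assume y: "y \<in> G" and c: "c \<in> KZ"
    have Rsh: "R (vadd y c) (vadd z c) = R y z" for z
    proof -
      have "vadd (vadd y c) (vadd z c) = vadd y z" unfolding vadd_def by blast
      thus ?thesis unfolding R_def by simp
    qed
    show "Cl (vadd y c) = (\<lambda>z. vadd z c) ` Cl y"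
    proof
      show "Cl (vadd y c) \<subseteq> (\<lambda>z. vadd z c) ` Cl y"
      proof
        fix x assume "x \<in> Cl (vadd y c)"
        hence x: "x \<in> G" "R (vadd y c) x" using Cl_eq by auto
        have "vadd x c \<in> Cl y" unfolding Cl_eq
          using Gshift[OF c Gv[OF x(1)]] x Rsh[of "vadd x c"] by (simp add: vadd_cancel)
        moreover have "x = vadd (vadd x c) c" by (simp add: vadd_cancel)
        ultimately show "x \<in> (\<lambda>z. vadd z c) ` Cl y" by blast
      qed
    next
      show "(\<lambda>z. vadd z c) ` Cl y \<subseteq> Cl (vadd y c)"
        using Gshift[OF c] Gv Rsh unfolding Cl_eq by auto
    qed
    show "Cl (vadd y c) = Cl y \<longleftrightarrow> c \<in> D"
    proof
      assume eq: "Cl (vadd y c) = Cl y"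
      have yc: "vadd y c \<in> G" using Gshift[OF c Gv[OF y]] y by simp
      have "vadd y c \<in> Cl y" using eq P1 yc by blast
      hence "R y (vadd y c)" using Cl_eq by auto
      hence cT: "real (cwt D c) \<le> T" unfolding R_def by (simp add: vadd_cancel2)
      show "c \<in> D"
      proof (rule ccontr)
        assume cD: "c \<notin> D"
        obtain w where w: "w \<in> D" "cwt D c = card (vadd c w)"
          using cwt_ex[OF dual_fin] dual_empty unfolding D_def by blast
        have "w \<in> KZ" using css w D_def KZ_def by blast
        hence "vadd c w \<in> KZ" using c KZ_def kerH_vadd by blast
        moreover have "vadd c w \<notin> D"
        proof
          assume "vadd c w \<in> D"
          hence "vadd (vadd c w) w \<in> D" using dual_vadd w D_def by blast
          thus False using cD by (simp add: vadd_cancel)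
        qed
        ultimately have "vadd c w \<in> (kerH n mZ HZ - dual n (kerH n mX HX)) \<union> (kerH n mX HX - dual n (kerH n mZ HZ))"
          unfolding KZ_def D_def by blast
        hence "css_dist n mX HX mZ HZ \<le> enat (card (vadd c w))"
          unfolding css_dist_def by (rule INF_lower)
        hence "d \<le> cwt D c" using dist w by simp
        thus False using cT Td by linarith
      qed
    next
      assume cD: "c \<in> D"
      have "R y z = R (vadd y c) z" for z
      proof -
        have "vadd (vadd y c) z = vadd (vadd y z) c" unfolding vadd_def by blast
        thus ?thesis unfolding R_def D_def using cD[unfolded D_def] cwt_shift by metis
      qed
      thus "Cl (vadd y c) = Cl y" unfolding Cl_eq by simp
    qed
  qed
  show ?thesis using P1 P2 P3 P4
    unfolding Cl_def G_def e_def KZ_def D_def by blast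
qed
end
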